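(* Let $\mathcal{X}$ and $\mathcal{Y}$ be finite sets, let $\mathcal{M}\subseteq\mathcal{X}\times\mathcal{Y}$ be a nonempty set (the actual matches), and let $\hat{\mathcal{M}}_H\subseteq\mathcal{X}\times\mathcal{Y}$ be a fixed nonempty set (the matches identified by a holdout batch algorithm, chosen independently of the validation samples). Let $\mathcal{S}_{\mathcal{M}}$ be a sample drawn uniformly at random without replacement from $\mathcal{M}$, and let $\mathcal{S}_{\mathcal{X}}$ be a sample drawn uniformly at random without replacement from $\mathcal{X}$. For $x\in\mathcal{X}$ let $m(x)=|\{y\in\mathcal{Y}:(x,y)\in\mathcal{M}\}|$, and let $k_y$ be an upper bound on $m(x)$ over all $x\in\mathcal{X}$. Define the precision $P_H=|\hat{\mathcal{M}}_H\cap\mathcal{M}|/|\hat{\mathcal{M}}_H|$. Then for any $\delta_r,\delta_p>0$, with probability at least $1-\delta_r-\delta_p$, $$P_H\ \ge\ \frac{|\mathcal{X}|}{|\hat{\mathcal{M}}_H|}\,p^-(\mathcal{M},\mathcal{S}_{\mathcal{M}},\mathbf{1}_{\hat{\mathcal{M}}_H},0,1,\delta_r)\,p^-(\mathcal{X},\mathcal{S}_{\mathcal{X}},m,0,k_y,\delta_p).$$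
   Context: PAC bound rules: $p^+$ and $p^-$ are functions which, given a finite set $\mathcal{P}$ (population), a subset $\mathcal{S}\subseteq\mathcal{P}$, a function $f:\mathcal{P}\to\mathbb{R}$, reals $a\le b$ and $\delta>0$, return a real number, and satisfy the following: for every finite set $\mathcal{P}$ with $|\mathcal{P}|=n$, every sample size $s$, and every $f$ with $a\le f(x)\le b$ for all $x\in\mathcal{P}$, if $\mathcal{S}$ is a size-$s$ sample drawn uniformly at random without replacement from $\mathcal{P}$ and $\mu=\frac1n\sum_{x\in\mathcal{P}}f(x)$, then $\Pr\{\mu>p^+(\mathcal{P},\mathcal{S},f,a,b,\delta)\}\le\delta$ and $\Pr\{\mu<p^-(\mathcal{P},\mathcal{S},f,a,b,\delta)\}\le\delta$. $\mathbf{1}_{A}$ denotes the indicator function of a set $A$. *)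

theory Defs
  imports "HOL-Probability.Probability"
begin

text \<open>All size-s subsets of a population P; sampling uniformly without
  replacement is the uniform distribution on this set.\<close>
definition samples :: "'a set \<Rightarrow> nat \<Rightarrow> 'a set set" where
  "samples P s = {S. S \<subseteq> P \<and> card S = s}"

definition sample_pmf :: "'a set \<Rightarrow> nat \<Rightarrow> 'a set pmf" where
  "sample_pmf P s = pmf_of_set (samples P s)"

definition pop_mean :: "'a set \<Rightarrow> ('a \<Rightarrow> real) \<Rightarrow> real" where
  "pop_mean P f = (\<Sum>x\<in>P. f x) / real (card P)"

definition pac_lower ::
  "('a set \<Rightarrow> 'a set \<Rightarrow> ('a \<Rightarrow> real) \<Rightarrow> real \<Rightarrow> real \<Rightarrow> real \<Rightarrow> real) \<Rightarrow> bool" where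
  "pac_lower p \<longleftrightarrow>
     (\<forall>P s f a b \<delta>. finite P \<and> P \<noteq> {} \<and> s \<le> card P \<and> a \<le> b \<and> \<delta> > 0 \<and>
        (\<forall>x\<in>P. a \<le> f x \<and> f x \<le> b) \<longrightarrow>
        measure_pmf.prob (sample_pmf P s) {S. pop_mean P f < p P S f a b \<delta>} \<le> \<delta>)"

end

theory Submission
  imports Defs
begin

lemma pair_bound:
  fixes D1 :: "'a pmf" and D2 :: "'b pmf"
  assumes "measure_pmf.prob D1 A \<le> d1" "measure_pmf.prob D2 B \<le> d2"
      and "\<And>u v. u \<notin> A \<Longrightarrow> v \<notin> B \<Longrightarrow> (u, v) \<in> G"
  shows "measure_pmf.prob (pair_pmf D1 D2) G \<ge> 1 - d1 - d2"
proof -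
  let ?p = "pair_pmf D1 D2"
  have sub: "UNIV - G \<subseteq> fst -` A \<union> snd -` B" using assms(3) by fastforce
  have "measure_pmf.prob ?p (UNIV - G) \<le> measure_pmf.prob ?p (fst -` A \<union> snd -` B)"
    using sub by (intro measure_pmf.finite_measure_mono) auto
  also have "\<dots> \<le> measure_pmf.prob ?p (fst -` A) + measure_pmf.prob ?p (snd -` B)"
    by (intro measure_Un_le) auto
  also have "measure_pmf.prob ?p (fst -` A) = measure_pmf.prob D1 A"
    by (metis measure_map_pmf map_fst_pair_pmf)
  also have "measure_pmf.prob ?p (snd -` B) = measure_pmf.prob D2 B"
    by (metis measure_map_pmf map_snd_pair_pmf)
  finally have "measure_pmf.prob ?p (UNIV - G) \<le> d1 + d2" using assms(1,2) by linarith
  moreover have "measure_pmf.prob ?p (UNIV - G) = 1 - measure_pmf.prob ?p G"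
    using measure_pmf.prob_compl[of G "pair_pmf D1 D2"] by simp
  ultimately show ?thesis by linarith
qed

theorem theorem1:
  fixes X :: "'x set" and Y :: "'y set"
    and M MH :: "('x \<times> 'y) set"
    and pM :: "('x \<times> 'y) set \<Rightarrow> ('x \<times> 'y) set \<Rightarrow> (('x \<times> 'y) \<Rightarrow> real) \<Rightarrow> real \<Rightarrow> real \<Rightarrow> real \<Rightarrow> real"
    and pX :: "'x set \<Rightarrow> 'x set \<Rightarrow> ('x \<Rightarrow> real) \<Rightarrow> real \<Rightarrow> real \<Rightarrow> real \<Rightarrow> real"
    and m :: "'x \<Rightarrow> real"
    and sM sX :: nat and ky \<delta>r \<delta>p :: real
  assumes "finite X" "finite Y"
    and "M \<subseteq> X \<times> Y" "M \<noteq> {}"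
    and "MH \<subseteq> X \<times> Y" "MH \<noteq> {}"
    and "sM \<le> card M" "sX \<le> card X"
    and "pac_lower pM" "pac_lower pX"
    and "\<forall>P S f a b \<delta>. a \<le> pM P S f a b \<delta>"
    and "\<forall>P S f a b \<delta>. a \<le> pX P S f a b \<delta>"
    and "\<And>x. m x = real (card {y\<in>Y. (x, y) \<in> M})"
    and "\<forall>x\<in>X. m x \<le> ky"
    and "\<delta>r > 0" "\<delta>p > 0"
  shows "measure_pmf.prob (pair_pmf (sample_pmf M sM) (sample_pmf X sX))
           {(SM, SX). real (card (MH \<inter> M)) / real (card MH) \<ge>
              real (card X) / real (card MH) * pM M SM (indicator MH) 0 1 \<delta>r
                * pX X SX m 0 ky \<delta>p}
         \<ge> 1 - \<delta>r - \<delta>p"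
proof -
  have finM: "finite M" using assms(1,2,3) finite_subset by blast
  have finMH: "finite MH" using assms(1,2,5) finite_subset by blast
  have Xne: "X \<noteq> {}" using assms(3,4) by auto
  have cX: "card X > 0" using Xne assms(1) by (simp add: card_gt_0_iff)
  have cM: "card M > 0" using finM assms(4) by (simp add: card_gt_0_iff)
  have cMH: "card MH > 0" using finMH assms(6) by (simp add: card_gt_0_iff)
  have m0: "\<And>x. m x \<ge> 0" using assms(13) by simp
  have ky0: "ky \<ge> 0" using Xne assms(14) m0 by (meson ex_in_conv order_trans)
  define mu1 where "mu1 = pop_mean M (indicator MH)"
  define mu2 where "mu2 = pop_mean X m"
  have mu1: "mu1 = real (card (MH \<inter> M)) / real (card M)"
  proof -
    have "(\<Sum>x\<in>M. indicator MH x :: real) = real (card (M \<inter> MH))"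
    proof -
      have "(\<Sum>x\<in>M. indicator MH x :: real) = (\<Sum>x\<in>M. real (indicator MH x :: nat))"
        by (intro sum.cong) (auto simp: indicator_def)
      also have "\<dots> = real (\<Sum>x\<in>M. indicator MH x :: nat)" by simp
      also have "\<dots> = real (card (M \<inter> MH))" using finM by (simp add: sum_indicator_eq_card)
      finally show ?thesis .
    qed
    then show ?thesis unfolding mu1_def pop_mean_def by (simp add: Int_commute)
  qed
  have summ: "(\<Sum>x\<in>X. m x) = real (card M)"
  proof -
    have "(\<Sum>x\<in>X. m x) = (\<Sum>x\<in>X. real (card {y\<in>Y. (x, y) \<in> M}))"
      using assms(13) by simp
    also have "\<dots> = real (\<Sum>x\<in>X. card {y\<in>Y. (x, y) \<in> M})" by simp
    also have "(\<Sum>x\<in>X. card {y\<in>Y. (x, y) \<in> M}) = card (\<Union>x\<in>X. Pair x ` {y\<in>Y. (x, y) \<in> M})"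
      by (subst card_UN_disjoint) (auto simp: assms(1,2) card_image inj_on_def)
    also have "(\<Union>x\<in>X. Pair x ` {y\<in>Y. (x, y) \<in> M}) = M" using assms(3) by auto
    finally show ?thesis .
  qed
  have mu2: "mu2 = real (card M) / real (card X)"
    unfolding mu2_def pop_mean_def summ ..
  have A: "measure_pmf.prob (sample_pmf M sM) {S. mu1 < pM M S (indicator MH) 0 1 \<delta>r} \<le> \<delta>r"
    using assms(9) finM assms(4,7,15) unfolding pac_lower_def mu1_def
    by (auto simp: indicator_def)
  have B: "measure_pmf.prob (sample_pmf X sX) {S. mu2 < pX X S m 0 ky \<delta>p} \<le> \<delta>p"
    using assms(10) assms(1) Xne assms(8,16,14) m0 ky0 unfolding pac_lower_def mu2_def
    by auto
  show ?thesis
  proof (rule pair_bound[OF A B])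
    fix u v
    assume u: "u \<notin> {S. mu1 < pM M S (indicator MH) 0 1 \<delta>r}"
      and v: "v \<notin> {S. mu2 < pX X S m 0 ky \<delta>p}"
    define a where "a = pM M u (indicator MH) 0 1 \<delta>r"
    define b where "b = pX X v m 0 ky \<delta>p"
    have a0: "0 \<le> a" "a \<le> mu1" using u assms(11) unfolding a_def by auto
    have b0: "0 \<le> b" "b \<le> mu2" using v assms(12) unfolding b_def by auto
    have "a * b \<le> mu1 * mu2"
      using a0 b0 by (intro mult_mono) (auto simp: mu1)
    also have "mu1 * mu2 = real (card (MH \<inter> M)) / real (card X)"
      using cM by (simp add: mu1 mu2)
    finally have ab: "a * b \<le> real (card (MH \<inter> M)) / real (card X)" .
    have "real (card X) / real (card MH) * a * b
          = real (card X) / real (card MH) * (a * b)" by simp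
    also have "\<dots> \<le> real (card X) / real (card MH) * (real (card (MH \<inter> M)) / real (card X))"
      using ab by (intro mult_left_mono) auto
    also have "\<dots> = real (card (MH \<inter> M)) / real (card MH)" using cX by simp
    finally show "(u, v) \<in> {(SM, SX). real (card (MH \<inter> M)) / real (card MH) \<ge>
              real (card X) / real (card MH) * pM M SM (indicator MH) 0 1 \<delta>r
                * pX X SX m 0 ky \<delta>p}"
      unfolding a_def b_def by simp
  qed
qed

end
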